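(* For all integers $0\le k_1\le k_2<k_3$, $$\sigma_2(\mathsf S_{k_1,k_2,k_3})=\sigma_2\big((I\otimes A_H)\,G_{k_2\bmod s}\,(I\otimes A_H)\big),$$ where singular values of $\mathsf S_{k_1,k_2,k_3}:\mathbb R^{W[k_2+1,k_3]}\to\mathbb R^{W[k_1,k_2]}$ are taken with respect to the uniform probability measures on $W[k_2+1,k_3]$ and $W[k_1,k_2]$.
   Context: $G$ is a $d_1$-regular undirected graph on $[n]$ with a locally invertible rotation map $\mathrm{rot}_G$; $H$ is a $d_2$-regular undirected graph on $[d_1]^s$ with normalized adjacency $A_H$ and a fixed labeling of its edges at each vertex. $\mathrm{Rot}_i$ ($0\le i<s$) sends $(v,(a_0,\dots,a_{s-1}))$ to $(v',(a_0,\dots,a_i',\dots,a_{s-1}))$ with $(v',a_i')=\mathrm{rot}_G(v,a_i)$, and $G_i$ is its permutation matrix. For $0\le k_1\le k_2$, $W[k_1,k_2]$ is the set of tuples $(x_{k_1},(a_{k_1},b_{k_1}),\dots,(a_{k_2-1},b_{k_2-1}))$ with $x_{k_1}\in[n]\times[d_1]^s$, $(a_i,b_i)\in[d_2]^2$, determining vertices $x_{k_1},\dots,x_{k_2}$ where $x_{i+1}$ is obtained from $x_i$ by an $H$-step along edge $a_i$, then $\mathrm{Rot}_{i\bmod s}$, then an $H$-step along edge $b_i$. For $k_1\le k_2<k_3$, a uniform $\omega\in W[k_1,k_3]$ splits as $\omega_1\in W[k_1,k_2]$ (start vertex and first $k_2-k_1$ label pairs) and $\omega_2\in W[k_2+1,k_3]$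 (vertex $x_{k_2+1}$ and remaining labels); $(\mathsf S_{k_1,k_2,k_3}f)(w)=\mathbb E[f(\omega_2)\mid\omega_1=w]$. $\sigma_2$ denotes the second largest singular value. *)

theory Defs
  imports "HOL-Computational_Algebra.Polynomial" "HOL-Combinatorics.Permutations"
begin

definition det_on :: "'a set \<Rightarrow> ('a \<Rightarrow> 'a \<Rightarrow> 'b::comm_ring_1) \<Rightarrow> 'b" where
  "det_on A M = (\<Sum>p\<in>{p. p permutes A}. of_int (sign p) * (\<Prod>a\<in>A. M a (p a)))"

definition char_poly_on :: "'a set \<Rightarrow> ('a \<Rightarrow> 'a \<Rightarrow> real) \<Rightarrow> real poly" where
  "char_poly_on A M = det_on A (\<lambda>a b. (if a = b then [:0, 1:] else 0) - [:M a b:])"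

definition eig_count_ge :: "'a set \<Rightarrow> ('a \<Rightarrow> 'a \<Rightarrow> real) \<Rightarrow> real \<Rightarrow> nat" where
  "eig_count_ge A M x =
     (\<Sum>y\<in>{y. poly (char_poly_on A M) y = 0 \<and> x \<le> y}. order y (char_poly_on A M))"

text \<open>k-th largest eigenvalue counted with multiplicity (k >= 1); padded with 0 if there
  are fewer than k eigenvalues.\<close>
definition kth_largest_eig :: "'a set \<Rightarrow> ('a \<Rightarrow> 'a \<Rightarrow> real) \<Rightarrow> nat \<Rightarrow> real" where
  "kth_largest_eig A M k =
     (let E = {x. poly (char_poly_on A M) x = 0 \<and> k \<le> eig_count_ge A M x}
      in if E = {} then 0 else Max E)"

text \<open>Linear operators R^A -> R^B are represented as maps between function spaces;
  matrix entry (b,a) of T is (T e_a)(b).\<close>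
definition unit_vec :: "'a \<Rightarrow> 'a \<Rightarrow> real" where
  "unit_vec a = (\<lambda>x. if x = a then 1 else 0)"

text \<open>Matrix of T^* T, where the adjoint T^* is taken with respect to the inner products
  of L^2(A, muA) and L^2(B, muB):  (T^* g)(a) = (1/muA a) * sum_b muB b * T(e_a)(b) * g b.\<close>
definition gram_wrt ::
  "'a set \<Rightarrow> ('a \<Rightarrow> real) \<Rightarrow> 'b set \<Rightarrow> ('b \<Rightarrow> real) \<Rightarrow> (('a \<Rightarrow> real) \<Rightarrow> ('b \<Rightarrow> real))
     \<Rightarrow> 'a \<Rightarrow> 'a \<Rightarrow> real" where
  "gram_wrt A muA B muB T a a' =
     (1 / muA a) * (\<Sum>b\<in>B. muB b * T (unit_vec a) b * T (unit_vec a') b)"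

definition singular_value ::
  "'a set \<Rightarrow> ('a \<Rightarrow> real) \<Rightarrow> 'b set \<Rightarrow> ('b \<Rightarrow> real) \<Rightarrow> (('a \<Rightarrow> real) \<Rightarrow> ('b \<Rightarrow> real))
     \<Rightarrow> nat \<Rightarrow> real" where
  "singular_value A muA B muB T k = sqrt (kth_largest_eig A (gram_wrt A muA B muB T) k)"

definition uniform_prob :: "'a set \<Rightarrow> 'a \<Rightarrow> real" where
  "uniform_prob A = (\<lambda>_. 1 / real (card A))"

definition sigma2_unif :: "'a set \<Rightarrow> 'b set \<Rightarrow> (('a \<Rightarrow> real) \<Rightarrow> ('b \<Rightarrow> real)) \<Rightarrow> real" where
  "sigma2_unif A B T = singular_value A (uniform_prob A) B (uniform_prob B) T 2"

definition mat_mult :: "'a set \<Rightarrow> ('a \<Rightarrow> 'a \<Rightarrow> real) \<Rightarrow> ('a \<Rightarrow> 'a \<Rightarrow> real) \<Rightarrow> 'a \<Rightarrow> 'a \<Rightarrow> real" where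
  "mat_mult V M1 M2 x z = (\<Sum>y\<in>V. M1 x y * M2 y z)"

definition mat_op :: "'a set \<Rightarrow> ('a \<Rightarrow> 'a \<Rightarrow> real) \<Rightarrow> ('a \<Rightarrow> real) \<Rightarrow> 'a \<Rightarrow> real" where
  "mat_op V M f x = (\<Sum>y\<in>V. M x y * f y)"

text \<open>rot : [n] x [d] -> [n] x [d] is the rotation map of an undirected d-regular graph.\<close>
definition rotation_map :: "nat \<Rightarrow> nat \<Rightarrow> (nat \<times> nat \<Rightarrow> nat \<times> nat) \<Rightarrow> bool" where
  "rotation_map n d rot \<longleftrightarrow>
     (\<forall>v<n. \<forall>a<d. rot (v, a) \<in> {..<n} \<times> {..<d} \<and> rot (rot (v, a)) = (v, a))"

definition locally_invertible :: "nat \<Rightarrow> nat \<Rightarrow> (nat \<times> nat \<Rightarrow> nat \<times> nat) \<Rightarrow> bool" where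
  "locally_invertible n d rot \<longleftrightarrow>
     (\<exists>\<pi>. \<pi> permutes {..<d} \<and> (\<forall>v<n. \<forall>a<d. snd (rot (v, a)) = \<pi> a))"

text \<open>[d1]^s, as lists of length s.\<close>
definition cube :: "nat \<Rightarrow> nat \<Rightarrow> nat list set" where
  "cube d1 s = {\<alpha>. length \<alpha> = s \<and> set \<alpha> \<subseteq> {..<d1}}"

text \<open>H given by its edge labeling nbr u j = j-th neighbour of u; undirected d2-regular
  (multi)graph on V: the number of edges from u to w equals the number from w to u.\<close>
definition undirected_regular_labeling :: "'v set \<Rightarrow> nat \<Rightarrow> ('v \<Rightarrow> nat \<Rightarrow> 'v) \<Rightarrow> bool" where
  "undirected_regular_labeling V d nbr \<longleftrightarrow>
     (\<forall>u\<in>V. \<forall>j<d. nbr u j \<in> V) \<and>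
     (\<forall>u\<in>V. \<forall>w\<in>V. card {j. j < d \<and> nbr u j = w} = card {j. j < d \<and> nbr w j = u})"

definition norm_adj :: "nat \<Rightarrow> ('v \<Rightarrow> nat \<Rightarrow> 'v) \<Rightarrow> 'v \<Rightarrow> 'v \<Rightarrow> real" where
  "norm_adj d nbr u w = real (card {j. j < d \<and> nbr u j = w}) / real d"

definition Vtx :: "nat \<Rightarrow> nat \<Rightarrow> nat \<Rightarrow> (nat \<times> nat list) set" where
  "Vtx n d1 s = {..<n} \<times> cube d1 s"

definition Rot :: "(nat \<times> nat \<Rightarrow> nat \<times> nat) \<Rightarrow> nat \<Rightarrow> nat \<times> nat list \<Rightarrow> nat \<times> nat list" where
  "Rot rot i x = (case x of (v, \<alpha>) \<Rightarrow> (case rot (v, \<alpha> ! i) of (v', a') \<Rightarrow> (v', \<alpha>[i := a'])))"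

definition Hstep :: "(nat list \<Rightarrow> nat \<Rightarrow> nat list) \<Rightarrow> nat \<Rightarrow> nat \<times> nat list \<Rightarrow> nat \<times> nat list" where
  "Hstep nbr a x = (fst x, nbr (snd x) a)"

definition walk_step :: "(nat \<times> nat \<Rightarrow> nat \<times> nat) \<Rightarrow> (nat list \<Rightarrow> nat \<Rightarrow> nat list) \<Rightarrow> nat
    \<Rightarrow> nat \<Rightarrow> nat \<times> nat list \<Rightarrow> nat \<Rightarrow> nat \<Rightarrow> nat \<times> nat list" where
  "walk_step rot nbr s i x a b = Hstep nbr b (Rot rot (i mod s) (Hstep nbr a x))"

text \<open>walk_from ... i x_i [(a_i,b_i),...,(a_{j-1},b_{j-1})] = x_j.\<close>
fun walk_from :: "(nat \<times> nat \<Rightarrow> nat \<times> nat) \<Rightarrow> (nat list \<Rightarrow> nat \<Rightarrow> nat list) \<Rightarrow> nat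
    \<Rightarrow> nat \<Rightarrow> nat \<times> nat list \<Rightarrow> (nat \<times> nat) list \<Rightarrow> nat \<times> nat list" where
  "walk_from rot nbr s i x [] = x"
| "walk_from rot nbr s i x ((a, b) # ls) = walk_from rot nbr s (Suc i) (walk_step rot nbr s i x a b) ls"

text \<open>W[k1,k2]: start vertex x_{k1} and the label pairs (a_i,b_i), k1 <= i < k2.\<close>
definition Wset :: "nat \<Rightarrow> nat \<Rightarrow> nat \<Rightarrow> nat \<Rightarrow> nat \<Rightarrow> nat
    \<Rightarrow> ((nat \<times> nat list) \<times> (nat \<times> nat) list) set" where
  "Wset n d1 d2 s k1 k2 = {(x, ls). x \<in> Vtx n d1 s \<and> length ls = k2 - k1 \<and>
                                     set ls \<subseteq> {..<d2} \<times> {..<d2}}"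

text \<open>Splitting omega in W[k1,k3] into omega_1 in W[k1,k2] and omega_2 in W[k2+1,k3].\<close>
definition split1 :: "nat \<Rightarrow> nat \<Rightarrow> (nat \<times> nat list) \<times> (nat \<times> nat) list
    \<Rightarrow> (nat \<times> nat list) \<times> (nat \<times> nat) list" where
  "split1 k1 k2 \<omega> = (fst \<omega>, take (k2 - k1) (snd \<omega>))"

definition split2 :: "(nat \<times> nat \<Rightarrow> nat \<times> nat) \<Rightarrow> (nat list \<Rightarrow> nat \<Rightarrow> nat list) \<Rightarrow> nat
    \<Rightarrow> nat \<Rightarrow> nat \<Rightarrow> (nat \<times> nat list) \<times> (nat \<times> nat) list
    \<Rightarrow> (nat \<times> nat list) \<times> (nat \<times> nat) list" where
  "split2 rot nbr s k1 k2 \<omega> =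
     (walk_from rot nbr s k1 (fst \<omega>) (take (k2 - k1 + 1) (snd \<omega>)), drop (k2 - k1 + 1) (snd \<omega>))"

text \<open>(S f)(w) = E[f(omega_2) | omega_1 = w] for omega uniform on W[k1,k3].\<close>
definition S_op :: "nat \<Rightarrow> nat \<Rightarrow> nat \<Rightarrow> nat \<Rightarrow> (nat \<times> nat \<Rightarrow> nat \<times> nat)
    \<Rightarrow> (nat list \<Rightarrow> nat \<Rightarrow> nat list) \<Rightarrow> nat \<Rightarrow> nat \<Rightarrow> nat
    \<Rightarrow> ((nat \<times> nat list) \<times> (nat \<times> nat) list \<Rightarrow> real)
    \<Rightarrow> (nat \<times> nat list) \<times> (nat \<times> nat) list \<Rightarrow> real" where
  "S_op n d1 d2 s rot nbr k1 k2 k3 f w =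
     (let \<Omega> = {\<omega> \<in> Wset n d1 d2 s k1 k3. split1 k1 k2 \<omega> = w}
      in (\<Sum>\<omega>\<in>\<Omega>. f (split2 rot nbr s k1 k2 \<omega>)) / real (card \<Omega>))"

definition I_tensor_AH :: "nat \<Rightarrow> (nat list \<Rightarrow> nat \<Rightarrow> nat list)
    \<Rightarrow> nat \<times> nat list \<Rightarrow> nat \<times> nat list \<Rightarrow> real" where
  "I_tensor_AH d2 nbr x y = (if fst x = fst y then norm_adj d2 nbr (snd x) (snd y) else 0)"

definition Gmat :: "(nat \<times> nat \<Rightarrow> nat \<times> nat) \<Rightarrow> nat \<Rightarrow> nat \<times> nat list \<Rightarrow> nat \<times> nat list \<Rightarrow> real" where
  "Gmat rot i x y = (if Rot rot i y = x then 1 else 0)"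

end

theory Submission
  imports Defs "Jordan_Normal_Form.Determinant"
begin


lemma sylvester_det:
  fixes X :: "'a::idom mat" and t :: 'a
  assumes X: "X \<in> carrier_mat a b" and Y: "Y \<in> carrier_mat b a"
  shows "t ^ b * det (t \<cdot>\<^sub>m 1\<^sub>m a - X * Y) = t ^ a * det (t \<cdot>\<^sub>m 1\<^sub>m b - Y * X)"
proof -
  let ?L = "four_block_mat (1\<^sub>m a) X Y (t \<cdot>\<^sub>m 1\<^sub>m b)"
  let ?E1 = "four_block_mat (1\<^sub>m a) (0\<^sub>m a b) (- Y) (1\<^sub>m b)"
  let ?E2 = "four_block_mat (t \<cdot>\<^sub>m 1\<^sub>m a) (- X) (0\<^sub>m b a) (1\<^sub>m b)"
  have L: "?L \<in> carrier_mat (a+b) (a+b)" using X Y by auto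
  have E1: "?E1 \<in> carrier_mat (a+b) (a+b)" using X Y by auto
  have E2: "?E2 \<in> carrier_mat (a+b) (a+b)" using X Y by auto
  have C1: "t \<cdot>\<^sub>m 1\<^sub>m b - Y * X \<in> carrier_mat b b" using X Y by auto
  have C2: "t \<cdot>\<^sub>m 1\<^sub>m a - X * Y \<in> carrier_mat a a" using X Y by auto
  have p1: "?E1 * ?L = four_block_mat (1\<^sub>m a) X (0\<^sub>m b a) (t \<cdot>\<^sub>m 1\<^sub>m b - Y * X)"
    apply (subst mult_four_block_mat[where ?nr1.0=a and ?n1.0=a and ?n2.0=b and ?nr2.0=b and ?nc1.0=a and ?nc2.0=b])
    using X Y apply auto
    done
  have "det ?E1 * det ?L = det (?E1 * ?L)" using det_mult[OF E1 L] by simp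
  also have "\<dots> = det (1\<^sub>m a) * det (t \<cdot>\<^sub>m 1\<^sub>m b - Y * X)"
    unfolding p1 by (rule det_four_block_mat_lower_left_zero[OF one_carrier_mat X refl C1])
  finally have d1: "det ?E1 * det ?L = det (t \<cdot>\<^sub>m 1\<^sub>m b - Y * X)" by simp
  have "det ?E1 = det (1\<^sub>m a) * det (1\<^sub>m b)"
    by (rule det_four_block_mat_upper_right_zero[OF one_carrier_mat refl _ one_carrier_mat]) (use Y in auto)
  hence "det ?E1 = 1" by simp
  with d1 have dL: "det ?L = det (t \<cdot>\<^sub>m 1\<^sub>m b - Y * X)" by simp
  have p2: "?E2 * ?L = four_block_mat (t \<cdot>\<^sub>m 1\<^sub>m a - X * Y) (0\<^sub>m a b) Y (t \<cdot>\<^sub>m 1\<^sub>m b)"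
    apply (subst mult_four_block_mat[where ?nr1.0=a and ?n1.0=a and ?n2.0=b and ?nr2.0=b and ?nc1.0=a and ?nc2.0=b])
    using X Y apply auto
    apply (rule eq_matI; auto simp: algebra_simps)
    apply (subst (asm) scalar_prod_left_unit[where n=a]; auto)
    done
  have "det ?E2 * det ?L = det (?E2 * ?L)" using det_mult[OF E2 L] by simp
  also have "\<dots> = det (t \<cdot>\<^sub>m 1\<^sub>m a - X * Y) * det (t \<cdot>\<^sub>m 1\<^sub>m b)"
    unfolding p2 by (rule det_four_block_mat_upper_right_zero[OF C2 refl Y]) simp
  finally have d2: "det ?E2 * det ?L = det (t \<cdot>\<^sub>m 1\<^sub>m a - X * Y) * t ^ b" by simp
  have "det ?E2 = det (t \<cdot>\<^sub>m 1\<^sub>m a) * det (1\<^sub>m b)"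
    by (rule det_four_block_mat_lower_left_zero[OF _ _ refl one_carrier_mat]) (use X in auto)
  hence "det ?E2 = t ^ a" by simp
  with d2 dL show ?thesis by (simp add: mult.commute)
qed

lemma det_on_bij:
  assumes f: "bij_betw f I A" and fin: "finite I"
  shows "det_on A M = det_on I (\<lambda>i j. M (f i) (f j))"
proof -
  let ?h = "map_permutation I f"
  let ?g = "map_permutation A (inv_into I f)"
  have injf: "inj_on f I" using f by (auto simp: bij_betw_def)
  have bijg: "bij_betw (inv_into I f) A I" using f by (rule bij_betw_inv_into)
  have hb: "bij_betw ?h {p. p permutes I} {q. q permutes A}"
  proof (rule bij_betw_byWitness[where f' = ?g])
    show "\<forall>p\<in>{p. p permutes I}. ?g (?h p) = p"
      using map_permutation_compose_inv[OF f] f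
      by (auto simp: bij_betw_def inv_into_f_f)
    show "\<forall>q\<in>{q. q permutes A}. ?h (?g q) = q"
      using map_permutation_compose_inv[OF bijg] f
      by (auto simp: bij_betw_def f_inv_into_f)
    show "?h ` {p. p permutes I} \<subseteq> {q. q permutes A}"
      using map_permutation_permutes[OF f] by auto
    show "?g ` {q. q permutes A} \<subseteq> {p. p permutes I}"
      using map_permutation_permutes[OF bijg] by auto
  qed
  have "det_on A M = (\<Sum>p\<in>{p. p permutes I}. of_int (sign (?h p)) * (\<Prod>a\<in>A. M a (?h p a)))"
    unfolding det_on_def by (rule sum.reindex_bij_betw[OF hb, symmetric])
  also have "\<dots> = (\<Sum>p\<in>{p. p permutes I}. of_int (sign p) * (\<Prod>i\<in>I. M (f i) (f (p i))))"
  proof (rule sum.cong[OF refl])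
    fix p assume p: "p \<in> {p. p permutes I}"
    have "sign (?h p) = sign p" using sign_map_permutation[OF injf _ fin] p by auto
    moreover have "(\<Prod>a\<in>A. M a (?h p a)) = (\<Prod>i\<in>I. M (f i) (?h p (f i)))"
      by (rule prod.reindex_bij_betw[OF f, symmetric])
    moreover have "\<And>i. i \<in> I \<Longrightarrow> ?h p (f i) = f (p i)"
      by (rule map_permutation_apply[OF injf])
    ultimately show "of_int (sign (?h p)) * (\<Prod>a\<in>A. M a (?h p a)) = of_int (sign p) * (\<Prod>i\<in>I. M (f i) (f (p i)))"
      by simp
  qed
  finally show ?thesis unfolding det_on_def .
qed

lemma det_on_mat: "det_on {0..<N} M = det (mat N N (\<lambda>(i,j). M i j))"
  unfolding det_on_def det_def by (auto intro!: sum.cong prod.cong)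

lemma char_poly_sylvester:
  fixes X :: "'a \<Rightarrow> 'b \<Rightarrow> real" and Y :: "'b \<Rightarrow> 'a \<Rightarrow> real"
  assumes A: "finite A" and B: "finite B"
  shows "[:0,1:] ^ card B * char_poly_on A (\<lambda>a a'. \<Sum>b\<in>B. X a b * Y b a')
       = [:0,1:] ^ card A * char_poly_on B (\<lambda>b b'. \<Sum>a\<in>A. Y b a * X a b')"
proof -
  obtain f where f: "bij_betw f {0..<card A} A" using ex_bij_betw_nat_finite[OF A] by blast
  obtain g where g: "bij_betw g {0..<card B} B" using ex_bij_betw_nat_finite[OF B] by blast
  define na where "na = card A"
  define nb where "nb = card B"
  define Xp where "Xp = mat na nb (\<lambda>(i,j). [: X (f i) (g j) :])"
  define Yp where "Yp = mat nb na (\<lambda>(i,j). [: Y (g i) (f j) :])"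
  have Xc: "Xp \<in> carrier_mat na nb" and Yc: "Yp \<in> carrier_mat nb na" by (auto simp: Xp_def Yp_def)
  have injf: "inj_on f {0..<na}" using f by (auto simp: bij_betw_def na_def)
  have injg: "inj_on g {0..<nb}" using g by (auto simp: bij_betw_def nb_def)
  have e1: "char_poly_on A (\<lambda>a a'. \<Sum>b\<in>B. X a b * Y b a') = det ([:0,1:] \<cdot>\<^sub>m 1\<^sub>m na - Xp * Yp)"
  proof -
    have "char_poly_on A (\<lambda>a a'. \<Sum>b\<in>B. X a b * Y b a') =
       det_on {0..<na} (\<lambda>i j. (if f i = f j then [:0, 1:] else 0) - [:\<Sum>b\<in>B. X (f i) b * Y b (f j):])"
      unfolding char_poly_on_def na_def by (rule det_on_bij[OF f]) simp
    also have "\<dots> = det ([:0,1:] \<cdot>\<^sub>m 1\<^sub>m na - Xp * Yp)"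
      unfolding det_on_mat
    proof (rule arg_cong[where f=det], rule eq_matI)
      fix i j assume i: "i < dim_row ([:0,1:] \<cdot>\<^sub>m 1\<^sub>m na - Xp * Yp)" and j: "j < dim_col ([:0,1:] \<cdot>\<^sub>m 1\<^sub>m na - Xp * Yp)"
      hence i: "i < na" and j: "j < na" using Xc Yc by auto
      have "(Xp * Yp) $$ (i,j) = (\<Sum>k\<in>{0..<nb}. [:X (f i) (g k) * Y (g k) (f j):])"
        using i j by (auto simp: Xp_def Yp_def scalar_prod_def mult_to_poly mult.commute intro!: sum.cong)
      also have "\<dots> = [:\<Sum>k\<in>{0..<nb}. X (f i) (g k) * Y (g k) (f j):]" by (rule sum_to_poly)
      also have "(\<Sum>k\<in>{0..<nb}. X (f i) (g k) * Y (g k) (f j)) = (\<Sum>b\<in>B. X (f i) b * Y b (f j))"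
        by (rule sum.reindex_bij_betw[OF g[folded nb_def], where g="\<lambda>b. X (f i) b * Y b (f j)"])
      finally have "(Xp * Yp) $$ (i,j) = [:\<Sum>b\<in>B. X (f i) b * Y b (f j):]" .
      moreover have "(f i = f j) = (i = j)" using injf i j by (auto simp: inj_on_def)
      ultimately show "mat na na (\<lambda>(i, j). (if f i = f j then [:0, 1:] else 0) - [:\<Sum>b\<in>B. X (f i) b * Y b (f j):]) $$ (i, j) =
         ([:0, 1:] \<cdot>\<^sub>m 1\<^sub>m na - Xp * Yp) $$ (i, j)"
        using i j Xc Yc by auto
    qed (use Xc Yc in auto)
    finally show ?thesis .
  qed
  have e2: "char_poly_on B (\<lambda>b b'. \<Sum>a\<in>A. Y b a * X a b') = det ([:0,1:] \<cdot>\<^sub>m 1\<^sub>m nb - Yp * Xp)"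
  proof -
    have "char_poly_on B (\<lambda>b b'. \<Sum>a\<in>A. Y b a * X a b') =
       det_on {0..<nb} (\<lambda>i j. (if g i = g j then [:0, 1:] else 0) - [:\<Sum>a\<in>A. Y (g i) a * X a (g j):])"
      unfolding char_poly_on_def nb_def by (rule det_on_bij[OF g]) simp
    also have "\<dots> = det ([:0,1:] \<cdot>\<^sub>m 1\<^sub>m nb - Yp * Xp)"
      unfolding det_on_mat
    proof (rule arg_cong[where f=det], rule eq_matI)
      fix i j assume i: "i < dim_row ([:0,1:] \<cdot>\<^sub>m 1\<^sub>m nb - Yp * Xp)" and j: "j < dim_col ([:0,1:] \<cdot>\<^sub>m 1\<^sub>m nb - Yp * Xp)"
      hence i: "i < nb" and j: "j < nb" using Xc Yc by auto
      have "(Yp * Xp) $$ (i,j) = (\<Sum>k\<in>{0..<na}. [:Y (g i) (f k) * X (f k) (g j):])"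
        using i j by (auto simp: Xp_def Yp_def scalar_prod_def mult_to_poly mult.commute intro!: sum.cong)
      also have "\<dots> = [:\<Sum>k\<in>{0..<na}. Y (g i) (f k) * X (f k) (g j):]" by (rule sum_to_poly)
      also have "(\<Sum>k\<in>{0..<na}. Y (g i) (f k) * X (f k) (g j)) = (\<Sum>a\<in>A. Y (g i) a * X a (g j))"
        by (rule sum.reindex_bij_betw[OF f[folded na_def], where g="\<lambda>a. Y (g i) a * X a (g j)"])
      finally have "(Yp * Xp) $$ (i,j) = [:\<Sum>a\<in>A. Y (g i) a * X a (g j):]" .
      moreover have "(g i = g j) = (i = j)" using injg i j by (auto simp: inj_on_def)
      ultimately show "mat nb nb (\<lambda>(i, j). (if g i = g j then [:0, 1:] else 0) - [:\<Sum>a\<in>A. Y (g i) a * X a (g j):]) $$ (i, j) =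
         ([:0, 1:] \<cdot>\<^sub>m 1\<^sub>m nb - Yp * Xp) $$ (i, j)"
        using i j Xc Yc by auto
    qed (use Xc Yc in auto)
    finally show ?thesis .
  qed
  show ?thesis unfolding e1 e2 na_def[symmetric] nb_def[symmetric]
    by (rule sylvester_det[OF Xc Yc])
qed


definition kle :: "real poly \<Rightarrow> nat \<Rightarrow> real" where
  "kle p k = (let E = {x. poly p x = 0 \<and> k \<le> (\<Sum>y\<in>{y. poly p y = 0 \<and> x \<le> y}. order y p)}
      in if E = {} then 0 else Max E)"

lemma kth_kle: "kth_largest_eig A M k = kle (char_poly_on A M) k"
  unfolding kth_largest_eig_def kle_def eig_count_ge_def ..

lemma max_pos_part:
  fixes E :: "real set"
  assumes "finite E" "\<forall>y\<in>E. 0 \<le> y"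
  shows "(if E = {} then 0 else Max E) = (if E \<inter> {0<..} = {} then 0 else Max (E \<inter> {0<..}))"
proof (cases "E \<inter> {0<..} = {}")
  case True
  hence "E \<subseteq> {0}" using assms(2) by force
  then show ?thesis using True by (cases "E = {}") (auto simp: subset_singleton_iff)
next
  case False
  then obtain z where z: "z \<in> E" "z > 0" by auto
  have "Max E \<in> E" using assms(1) z by (intro Max_in) auto
  moreover have "Max E \<ge> z" using assms(1) z by auto
  ultimately have "Max E \<in> E \<inter> {0<..}" using z by auto
  hence "Max (E \<inter> {0<..}) = Max E"
    using assms(1) by (intro Max_eqI) auto
  then show ?thesis using False z by auto
qed

lemma kle_xpow:
  assumes p: "p = [:0,1:] ^ m * q" and nn: "\<And>y. poly q y = 0 \<Longrightarrow> 0 \<le> y"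
  shows "kle p k = kle q k"
proof (cases "q = 0")
  case True then show ?thesis using p by simp
next
  case q0: False
  have p0: "p \<noteq> 0" using p q0 by auto
  have rootp: "poly p y = 0 \<longleftrightarrow> (m > 0 \<and> y = 0) \<or> poly q y = 0" for y
    using p by (auto simp: poly_power)
  have ordp: "order y p = order y q" if "y \<noteq> 0" for y
  proof -
    have "order y p = order y ([:0,1:] ^ m) + order y q" using p p0 by (simp add: order_mult)
    moreover have "order y ([:0,1:] ^ m) = 0" using that by (intro order_0I) (simp add: poly_power)
    ultimately show ?thesis by simp
  qed
  define cp where "cp x = (\<Sum>y\<in>{y. poly p y = 0 \<and> x \<le> y}. order y p)" for x
  define cq where "cq x = (\<Sum>y\<in>{y. poly q y = 0 \<and> x \<le> y}. order y q)" for x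
  have cpq: "cp x = cq x" if "x > 0" for x
  proof -
    have "{y. poly p y = 0 \<and> x \<le> y} = {y. poly q y = 0 \<and> x \<le> y}" using that rootp by auto
    thus ?thesis unfolding cp_def cq_def using that by (auto intro!: sum.cong ordp)
  qed
  define Ep where "Ep = {x. poly p x = 0 \<and> k \<le> cp x}"
  define Eq where "Eq = {x. poly q x = 0 \<and> k \<le> cq x}"
  have finp: "finite Ep" unfolding Ep_def using poly_roots_finite[OF p0] by (rule finite_subset[rotated]) auto
  have finq: "finite Eq" unfolding Eq_def using poly_roots_finite[OF q0] by (rule finite_subset[rotated]) auto
  have nnp: "\<forall>y\<in>Ep. 0 \<le> y" unfolding Ep_def using rootp nn by auto
  have nnq: "\<forall>y\<in>Eq. 0 \<le> y" unfolding Eq_def using nn by auto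
  have "Ep \<inter> {0<..} = Eq \<inter> {0<..}" unfolding Ep_def Eq_def using rootp cpq by auto
  moreover have "kle p k = (if Ep = {} then 0 else Max Ep)" unfolding kle_def Ep_def cp_def by simp
  moreover have "kle q k = (if Eq = {} then 0 else Max Eq)" unfolding kle_def Eq_def cq_def by simp
  ultimately show ?thesis using max_pos_part[OF finp nnp] max_pos_part[OF finq nnq] by simp
qed

lemma kth_sylvester:
  fixes X :: "'a \<Rightarrow> 'b \<Rightarrow> real" and Y :: "'b \<Rightarrow> 'a \<Rightarrow> real"
  assumes A: "finite A" and B: "finite B" and le: "card B \<le> card A"
    and nn: "\<And>y. poly (char_poly_on B (\<lambda>b b'. \<Sum>a\<in>A. Y b a * X a b')) y = 0 \<Longrightarrow> 0 \<le> y"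
  shows "kth_largest_eig A (\<lambda>a a'. \<Sum>b\<in>B. X a b * Y b a') k
       = kth_largest_eig B (\<lambda>b b'. \<Sum>a\<in>A. Y b a * X a b') k"
proof -
  let ?p = "char_poly_on A (\<lambda>a a'. \<Sum>b\<in>B. X a b * Y b a')"
  let ?q = "char_poly_on B (\<lambda>b b'. \<Sum>a\<in>A. Y b a * X a b')"
  have "[:0,1:] ^ card B * ?p = [:0,1:] ^ card B * ([:0,1:] ^ (card A - card B) * ?q)"
    using char_poly_sylvester[OF A B, of X Y] le by (simp add: power_add[symmetric] mult.assoc[symmetric])
  hence "?p = [:0,1:] ^ (card A - card B) * ?q" by simp
  thus ?thesis unfolding kth_kle by (rule kle_xpow) (rule nn)
qed


lemma poly_det_on: "poly (det_on A M) x = det_on A (\<lambda>i j. poly (M i j) x)"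
  unfolding det_on_def by (simp add: poly_sum poly_prod)

lemma psd_roots_nonneg:
  fixes Z :: "'c \<Rightarrow> 'b \<Rightarrow> real"
  assumes B: "finite B" and C: "finite C"
    and root: "poly (char_poly_on B (\<lambda>b b'. \<Sum>c\<in>C. Z c b * Z c b')) l = 0"
  shows "0 \<le> l"
proof -
  obtain g where g: "bij_betw g {0..<card B} B" using ex_bij_betw_nat_finite[OF B] by blast
  define n where "n = card B"
  have injg: "inj_on g {0..<n}" using g by (auto simp: bij_betw_def n_def)
  define Q where "Q i j = (\<Sum>c\<in>C. Z c (g i) * Z c (g j))" for i j
  define Mr where "Mr = mat n n (\<lambda>(i,j). (if i = j then l else 0) - Q i j)"
  have Mc: "Mr \<in> carrier_mat n n" by (simp add: Mr_def)
  have "0 = det_on B (\<lambda>b b'. poly ((if b = b' then [:0, 1:] else 0) - [:\<Sum>c\<in>C. Z c b * Z c b':]) l)"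
    using root unfolding char_poly_on_def poly_det_on by simp
  also have "\<dots> = det_on {0..<n} (\<lambda>i j. (if g i = g j then l else 0) - Q i j)"
    unfolding n_def Q_def by (subst det_on_bij[OF g]) (auto intro!: arg_cong[where f="det_on _"] simp: fun_eq_iff)
  also have "\<dots> = det Mr" unfolding det_on_mat Mr_def
    by (rule arg_cong[where f=det], rule eq_matI) (use injg in \<open>auto simp: inj_on_def\<close>)
  finally have "det Mr = 0" by simp
  then obtain v where v: "v \<in> carrier_vec n" "v \<noteq> 0\<^sub>v n" "Mr *\<^sub>v v = 0\<^sub>v n"
    using det_0_iff_vec_prod_zero[OF Mc] by blast
  have eig: "l * v $ i = (\<Sum>j\<in>{0..<n}. Q i j * v $ j)" if i: "i < n" for i
  proof -
    have "0 = (Mr *\<^sub>v v) $ i" using v i by simp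
    also have "\<dots> = (\<Sum>j\<in>{0..<n}. ((if i = j then l else 0) - Q i j) * v $ j)"
      using i v(1) by (simp add: Mr_def scalar_prod_def)
    also have "\<dots> = l * v $ i - (\<Sum>j\<in>{0..<n}. Q i j * v $ j)"
    proof -
      have "(\<Sum>j\<in>{0..<n}. ((if i = j then l else 0) - Q i j) * v $ j)
          = (\<Sum>j\<in>{0..<n}. (if i = j then l * v $ j else 0)) - (\<Sum>j\<in>{0..<n}. Q i j * v $ j)"
        unfolding sum_subtractf[symmetric] by (rule sum.cong) (auto simp: left_diff_distrib)
      also have "(\<Sum>j\<in>{0..<n}. (if i = j then l * v $ j else 0)) = l * v $ i" using i by simp
      finally show ?thesis .
    qed
    finally show ?thesis by simp
  qed
  have "l * (\<Sum>i\<in>{0..<n}. v $ i * v $ i) = (\<Sum>i\<in>{0..<n}. v $ i * (l * v $ i))"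
    by (simp add: sum_distrib_left ac_simps)
  also have "\<dots> = (\<Sum>i\<in>{0..<n}. v $ i * (\<Sum>j\<in>{0..<n}. Q i j * v $ j))"
    using eig by simp
  also have "\<dots> = (\<Sum>c\<in>C. (\<Sum>i\<in>{0..<n}. Z c (g i) * v $ i) * (\<Sum>i\<in>{0..<n}. Z c (g i) * v $ i))"
    unfolding Q_def
  proof -
    have "(\<Sum>i\<in>{0..<n}. v $ i * (\<Sum>j\<in>{0..<n}. (\<Sum>c\<in>C. Z c (g i) * Z c (g j)) * v $ j))
       = (\<Sum>i\<in>{0..<n}. \<Sum>j\<in>{0..<n}. \<Sum>c\<in>C. (Z c (g i) * v $ i) * (Z c (g j) * v $ j))"
      by (simp add: sum_distrib_left sum_distrib_right ac_simps)
    also have "\<dots> = (\<Sum>i\<in>{0..<n}. \<Sum>c\<in>C. \<Sum>j\<in>{0..<n}. (Z c (g i) * v $ i) * (Z c (g j) * v $ j))"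
      by (rule sum.cong[OF refl], rule sum.swap)
    also have "\<dots> = (\<Sum>c\<in>C. \<Sum>i\<in>{0..<n}. \<Sum>j\<in>{0..<n}. (Z c (g i) * v $ i) * (Z c (g j) * v $ j))"
      by (rule sum.swap)
    also have "\<dots> = (\<Sum>c\<in>C. (\<Sum>i\<in>{0..<n}. Z c (g i) * v $ i) * (\<Sum>i\<in>{0..<n}. Z c (g i) * v $ i))"
      by (simp add: sum_product)
    finally show "(\<Sum>i\<in>{0..<n}. v $ i * (\<Sum>j\<in>{0..<n}. (\<Sum>c\<in>C. Z c (g i) * Z c (g j)) * v $ j))
       = (\<Sum>c\<in>C. (\<Sum>i\<in>{0..<n}. Z c (g i) * v $ i) * (\<Sum>i\<in>{0..<n}. Z c (g i) * v $ i))" .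
  qed
  also have "\<dots> \<ge> 0" by (intro sum_nonneg) simp
  finally have ge: "0 \<le> l * (\<Sum>i\<in>{0..<n}. v $ i * v $ i)" .
  obtain i where i: "i < n" "v $ i \<noteq> 0" using v by (metis carrier_vecD eq_vecI index_zero_vec(1,2))
  have "0 < (\<Sum>i\<in>{0..<n}. v $ i * v $ i)"
    using i by (intro sum_pos2[of _ i]) (auto simp: zero_less_mult_iff)
  with ge show ?thesis by (simp add: zero_le_mult_iff)
qed


lemma char_poly_on_cong:
  assumes "\<And>a b. a \<in> A \<Longrightarrow> b \<in> A \<Longrightarrow> M a b = M' a b"
  shows "char_poly_on A M = char_poly_on A M'"
  unfolding char_poly_on_def det_on_def
  by (intro sum.cong refl arg_cong2[where f="(*)"] prod.cong) (auto simp: assms permutes_in_image)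

lemma kth_cong:
  assumes "\<And>a b. a \<in> A \<Longrightarrow> b \<in> A \<Longrightarrow> M a b = M' a b"
  shows "kth_largest_eig A M k = kth_largest_eig A M' k"
proof -
  have "char_poly_on A M = char_poly_on A M'" by (rule char_poly_on_cong) (rule assms)
  then show ?thesis unfolding kth_kle by simp
qed

definition Lst :: "nat \<Rightarrow> nat \<Rightarrow> (nat \<times> nat) list set" where
  "Lst d2 l = {ls. length ls = l \<and> set ls \<subseteq> {..<d2} \<times> {..<d2}}"

lemma finite_Lst: "finite (Lst d2 l)"
  unfolding Lst_def using finite_lists_length_eq[of "{..<d2}\<times>{..<d2}" l] by (simp add: conj_commute)

lemma card_Lst: "card (Lst d2 l) = (d2 * d2) ^ l"
  unfolding Lst_def using card_lists_length_eq[of "{..<d2} \<times> {..<d2}" l]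
  by (simp add: conj_commute)

lemma Lst_Suc: "Lst d2 (Suc l) = (\<lambda>(p, ls). p # ls) ` (({..<d2} \<times> {..<d2}) \<times> Lst d2 l)"
  unfolding Lst_def
  by (auto simp: length_Suc_conv image_iff)

lemma sum_Lst_Suc:
  "(\<Sum>ls\<in>Lst d2 (Suc l). f ls) = (\<Sum>p\<in>{..<d2} \<times> {..<d2}. \<Sum>ls\<in>Lst d2 l. f (p # ls))"
proof -
  have inj: "inj_on (\<lambda>(p, ls). p # ls) (({..<d2} \<times> {..<d2}) \<times> Lst d2 l)"
    by (auto simp: inj_on_def)
  show ?thesis unfolding Lst_Suc sum.reindex[OF inj]
    by (simp add: sum.cartesian_product case_prod_beta)
qed

lemma finite_cube: "finite (cube d1 s)"
  unfolding cube_def by (rule finite_subset[OF _ finite_lists_length_eq[of "{..<d1}" s]]) auto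

lemma finite_Vtx: "finite (Vtx n d1 s)"
  unfolding Vtx_def using finite_cube by auto

lemma Wset_eq: "Wset n d1 d2 s k1 k2 = Vtx n d1 s \<times> Lst d2 (k2 - k1)"
  unfolding Wset_def Lst_def by auto

lemma card_ind: "real (card {j. j < (d::nat) \<and> P j}) = (\<Sum>j<d. if P j then 1 else 0)"
proof -
  have "(\<Sum>j<d. if P j then 1 else (0::real)) = (\<Sum>j\<in>{j\<in>{..<d}. P j}. 1)"
    by (rule sum.inter_filter[symmetric]) simp
  also have "{j\<in>{..<d}. P j} = {j. j < d \<and> P j}" by auto
  finally show ?thesis by simp
qed

lemma sum_prod2: "(\<Sum>x\<in>A \<times> B. F x) = (\<Sum>v\<in>A. \<Sum>u\<in>B. F (v,u))"
  by (subst sum.cartesian_product) simp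

definition ind :: "bool \<Rightarrow> real" where "ind P = (if P then 1 else 0)"

lemma sum_ind_eq: assumes "finite A" "y \<in> A" shows "(\<Sum>x\<in>A. ind (y = x) * g x) = g y"
proof -
  have "(\<Sum>x\<in>A. ind (y = x) * g x) = (\<Sum>x\<in>A. if y = x then g x else 0)"
    by (rule sum.cong) (auto simp: ind_def)
  then show ?thesis using assms by simp
qed

lemma sum_ind_eq1: assumes "finite A" "y \<in> A" shows "(\<Sum>x\<in>A. ind (y = x)) = 1"
  using sum_ind_eq[OF assms, of "\<lambda>_. 1"] by simp

definition wstep :: "nat \<Rightarrow> (nat \<times> nat \<Rightarrow> nat \<times> nat) \<Rightarrow> (nat list \<Rightarrow> nat \<Rightarrow> nat list) \<Rightarrow> nat \<Rightarrow> nat \<times> nat list \<Rightarrow> nat \<times> nat \<Rightarrow> nat \<times> nat list" where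
  "wstep s rot nbr i x p = walk_step rot nbr s i x (fst p) (snd p)"

context
  fixes n d1 d2 s :: nat and rot :: "nat \<times> nat \<Rightarrow> nat \<times> nat" and nbr :: "nat list \<Rightarrow> nat \<Rightarrow> nat list"
  assumes rm: "rotation_map n d1 rot"
    and url: "undirected_regular_labeling (cube d1 s) d2 nbr"
    and s0: "0 < s"
begin

abbreviation "V \<equiv> Vtx n d1 s"
abbreviation "C \<equiv> cube d1 s"

lemma nbr_in: "u \<in> C \<Longrightarrow> j < d2 \<Longrightarrow> nbr u j \<in> C"
  using url unfolding undirected_regular_labeling_def by blast

lemma Hstep_in: "x \<in> V \<Longrightarrow> a < d2 \<Longrightarrow> Hstep nbr a x \<in> V"
  using nbr_in unfolding Vtx_def Hstep_def by auto

lemma Rot_in: assumes x: "x \<in> V" and i: "i < s" shows "Rot rot i x \<in> V"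
proof -
  obtain v al where xv: "x = (v, al)" by (cases x)
  have v: "v < n" and al: "length al = s" "set al \<subseteq> {..<d1}" using x xv by (auto simp: Vtx_def cube_def)
  have ai: "al ! i < d1" using al i nth_mem by blast
  obtain v' a' where r: "rot (v, al ! i) = (v', a')" by (cases "rot (v, al ! i)")
  have "v' < n" "a' < d1" using rm v ai r unfolding rotation_map_def by fastforce+
  then show ?thesis using xv r al
    by (auto simp: Rot_def Vtx_def cube_def dest!: subsetD[OF set_update_subset_insert])
qed

lemma Rot_Rot: assumes x: "x \<in> V" and i: "i < s" shows "Rot rot i (Rot rot i x) = x"
proof -
  obtain v al where xv: "x = (v, al)" by (cases x)
  have v: "v < n" and al: "length al = s" "set al \<subseteq> {..<d1}" using x xv by (auto simp: Vtx_def cube_def)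
  have ai: "al ! i < d1" using al i nth_mem by blast
  obtain v' a' where r: "rot (v, al ! i) = (v', a')" by (cases "rot (v, al ! i)")
  have rr: "rot (v', a') = (v, al ! i)" using rm v ai r unfolding rotation_map_def by metis
  show ?thesis using xv r rr al i by (simp add: Rot_def)
qed

lemma Rot_bij: "i < s \<Longrightarrow> bij_betw (Rot rot i) V V"
  by (rule bij_betw_byWitness[where f'="Rot rot i"]) (auto simp: Rot_Rot Rot_in)

lemma sum_Rot: "i < s \<Longrightarrow> (\<Sum>x\<in>V. G (Rot rot i x)) = (\<Sum>x\<in>V. G x)"
  by (rule sum.reindex_bij_betw[OF Rot_bij])

lemma sum_nbr_core:
  "(\<Sum>u\<in>C. \<Sum>a<d2. g (nbr u a)) = real d2 * (\<Sum>u\<in>C. g u)"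
proof -
  have "(\<Sum>u\<in>C. \<Sum>a<d2. g (nbr u a)) = (\<Sum>u\<in>C. \<Sum>a<d2. \<Sum>w\<in>C. ind (nbr u a = w) * g w)"
    by (intro sum.cong refl) (simp add: sum_ind_eq finite_cube nbr_in)
  also have "\<dots> = (\<Sum>u\<in>C. \<Sum>w\<in>C. \<Sum>a<d2. ind (nbr u a = w) * g w)"
    by (rule sum.cong[OF refl], rule sum.swap)
  also have "\<dots> = (\<Sum>w\<in>C. \<Sum>u\<in>C. \<Sum>a<d2. ind (nbr u a = w) * g w)"
    by (rule sum.swap)
  also have "\<dots> = (\<Sum>w\<in>C. g w * (\<Sum>u\<in>C. \<Sum>a<d2. ind (nbr u a = w)))"
    by (simp add: sum_distrib_left sum_distrib_right mult.commute)
  also have "\<dots> = (\<Sum>w\<in>C. g w * real d2)"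
  proof (intro sum.cong refl arg_cong2[where f="(*)"])
    fix w assume w: "w \<in> C"
    have "(\<Sum>u\<in>C. \<Sum>a<d2. ind (nbr u a = w)) = (\<Sum>u\<in>C. real (card {j. j < d2 \<and> nbr u j = w}))"
      by (simp add: card_ind ind_def)
    also have "\<dots> = (\<Sum>u\<in>C. real (card {j. j < d2 \<and> nbr w j = u}))"
      using url w unfolding undirected_regular_labeling_def by (intro sum.cong refl) auto
    also have "\<dots> = (\<Sum>u\<in>C. \<Sum>a<d2. ind (u = nbr w a))"
      by (simp add: card_ind ind_def eq_commute)
    also have "\<dots> = (\<Sum>a<d2. \<Sum>u\<in>C. ind (nbr w a = u) * 1)"
      by (subst sum.swap) (simp add: eq_commute del: sum.swap)
    also have "\<dots> = (\<Sum>a<d2. 1)"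
      by (intro sum.cong refl) (simp add: sum_ind_eq1 finite_cube nbr_in w)
    finally show "(\<Sum>u\<in>C. \<Sum>a<d2. ind (nbr u a = w)) = real d2" by simp
  qed
  finally show ?thesis by (simp add: sum_distrib_left mult.commute)
qed

lemma sum_Hstep: "(\<Sum>x\<in>V. \<Sum>a<d2. G (Hstep nbr a x)) = real d2 * (\<Sum>x\<in>V. G x)"
proof -
  have "(\<Sum>x\<in>V. \<Sum>a<d2. G (Hstep nbr a x)) = (\<Sum>v<n. \<Sum>u\<in>C. \<Sum>a<d2. G (v, nbr u a))"
    unfolding Vtx_def sum_prod2 by (simp add: Hstep_def)
  also have "\<dots> = (\<Sum>v<n. real d2 * (\<Sum>u\<in>C. G (v, u)))"
    by (intro sum.cong refl sum_nbr_core)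
  also have "\<dots> = real d2 * (\<Sum>x\<in>V. G x)"
    unfolding Vtx_def sum_prod2 by (simp add: sum_distrib_left)
  finally show ?thesis .
qed


lemma wstep_in: "x \<in> V \<Longrightarrow> p \<in> {..<d2} \<times> {..<d2} \<Longrightarrow> wstep s rot nbr i x p \<in> V"
  unfolding wstep_def walk_step_def using s0 by (auto intro!: Hstep_in Rot_in)

lemma sum_wstep: "(\<Sum>x\<in>V. \<Sum>p\<in>{..<d2} \<times> {..<d2}. G (wstep s rot nbr i x p)) = real d2 * real d2 * (\<Sum>x\<in>V. G x)"
proof -
  define H1 where "H1 z = (\<Sum>b<d2. G (Hstep nbr b z))" for z
  have "(\<Sum>x\<in>V. \<Sum>p\<in>{..<d2} \<times> {..<d2}. G (wstep s rot nbr i x p)) = (\<Sum>x\<in>V. \<Sum>a<d2. H1 (Rot rot (i mod s) (Hstep nbr a x)))"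
    unfolding H1_def sum_prod2 by (simp add: wstep_def walk_step_def)
  also have "\<dots> = real d2 * (\<Sum>x\<in>V. H1 (Rot rot (i mod s) x))"
    by (rule sum_Hstep)
  also have "\<dots> = real d2 * (\<Sum>x\<in>V. H1 x)" using s0 by (simp add: sum_Rot)
  also have "\<dots> = real d2 * real d2 * (\<Sum>x\<in>V. G x)" unfolding H1_def by (simp add: sum_Hstep)
  finally show ?thesis .
qed

lemma walk_from_in: "x \<in> V \<Longrightarrow> ls \<in> Lst d2 l \<Longrightarrow> walk_from rot nbr s i x ls \<in> V"
proof (induction ls arbitrary: i x l)
  case Nil then show ?case by simp
next
  case (Cons p ls)
  obtain a b where p: "p = (a,b)" by (cases p)
  have "walk_step rot nbr s i x a b \<in> V" using wstep_in[of x p i] Cons.prems p by (auto simp: wstep_def Lst_def)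
  moreover have "ls \<in> Lst d2 (length ls)" using Cons.prems by (auto simp: Lst_def)
  ultimately show ?case using Cons.IH p by simp
qed

lemma sum_walk_from:
  "(\<Sum>x\<in>V. \<Sum>ls\<in>Lst d2 l. G (walk_from rot nbr s i x ls)) = (real d2 * real d2) ^ l * (\<Sum>x\<in>V. G x)"
proof (induction l arbitrary: i)
  case 0
  have "Lst d2 0 = {[]}" by (auto simp: Lst_def)
  then show ?case by simp
next
  case (Suc l)
  define H2 where "H2 z = (\<Sum>ls\<in>Lst d2 l. G (walk_from rot nbr s (Suc i) z ls))" for z
  have "(\<Sum>x\<in>V. \<Sum>ls\<in>Lst d2 (Suc l). G (walk_from rot nbr s i x ls))
      = (\<Sum>x\<in>V. \<Sum>p\<in>{..<d2} \<times> {..<d2}. H2 (wstep s rot nbr i x p))"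
    unfolding sum_Lst_Suc H2_def by (intro sum.cong refl) (auto simp: wstep_def split: prod.splits)
  also have "\<dots> = real d2 * real d2 * (\<Sum>x\<in>V. H2 x)" by (rule sum_wstep)
  also have "\<dots> = (real d2 * real d2) ^ Suc l * (\<Sum>x\<in>V. G x)" unfolding H2_def Suc.IH by simp
  finally show ?case .
qed

end


lemma walk_from_snoc:
  "walk_from rot nbr s i x (ls @ [p]) = walk_step rot nbr s (i + length ls) (walk_from rot nbr s i x ls) (fst p) (snd p)"
proof (induction ls arbitrary: i x)
  case Nil then show ?case by (cases p) simp
next
  case (Cons q ls) then show ?case by (cases q) simp
qed

definition TT :: "nat \<Rightarrow> nat \<Rightarrow> (nat \<times> nat \<Rightarrow> nat \<times> nat) \<Rightarrow> (nat list \<Rightarrow> nat \<Rightarrow> nat list) \<Rightarrow> nat \<Rightarrow> nat \<times> nat list \<Rightarrow> nat \<times> nat list \<Rightarrow> real" where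
  "TT d2 s rot nbr k x y = (\<Sum>p\<in>{..<d2} \<times> {..<d2}. ind (wstep s rot nbr k x p = y)) / (real d2 * real d2)"

context
  fixes n d1 d2 s :: nat and rot :: "nat \<times> nat \<Rightarrow> nat \<times> nat" and nbr :: "nat list \<Rightarrow> nat \<Rightarrow> nat list"
  assumes rm: "rotation_map n d1 rot"
    and url: "undirected_regular_labeling (cube d1 s) d2 nbr"
    and s0: "0 < s" and d20: "0 < d2"
begin

abbreviation "VV \<equiv> Vtx n d1 s"
abbreviation "DD \<equiv> {..<d2} \<times> {..<d2}"

lemma AH_entry: "I_tensor_AH d2 nbr x y = (\<Sum>a<d2. ind (Hstep nbr a x = y)) / real d2"
proof (cases "fst x = fst y")
  case True
  have "\<And>a. (Hstep nbr a x = y) = (nbr (snd x) a = snd y)" using True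
    by (cases x, cases y) (auto simp: Hstep_def)
  then show ?thesis using True by (simp add: I_tensor_AH_def norm_adj_def card_ind ind_def)
next
  case False
  have "\<And>a. Hstep nbr a x \<noteq> y" using False by (auto simp: Hstep_def)
  then show ?thesis using False by (simp add: I_tensor_AH_def ind_def)
qed

lemma AH_apply: assumes x: "x \<in> VV"
  shows "(\<Sum>y\<in>VV. I_tensor_AH d2 nbr x y * F y) = (\<Sum>a<d2. F (Hstep nbr a x)) / real d2"
proof -
  have "(\<Sum>y\<in>VV. I_tensor_AH d2 nbr x y * F y) = (\<Sum>y\<in>VV. \<Sum>a<d2. ind (Hstep nbr a x = y) * F y) / real d2"
    unfolding AH_entry by (simp add: sum_divide_distrib sum_distrib_right)
  also have "\<dots> = (\<Sum>a<d2. \<Sum>y\<in>VV. ind (Hstep nbr a x = y) * F y) / real d2"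
    by (subst sum.swap) simp
  also have "\<dots> = (\<Sum>a<d2. F (Hstep nbr a x)) / real d2"
    using Hstep_in[OF rm url s0 x] by (simp add: sum_ind_eq finite_Vtx)
  finally show ?thesis .
qed

lemma G_apply: assumes z: "z \<in> VV" and i: "i < s"
  shows "(\<Sum>z'\<in>VV. Gmat rot i z z' * F z') = F (Rot rot i z)"
proof -
  have "(\<Sum>z'\<in>VV. Gmat rot i z z' * F z') = (\<Sum>z'\<in>VV. ind (Rot rot i z = z') * F z')"
  proof (rule sum.cong[OF refl])
    fix z' assume z': "z' \<in> VV"
    have "(Rot rot i z' = z) = (Rot rot i z = z')"
      using Rot_Rot[OF rm url s0 z i] Rot_Rot[OF rm url s0 z' i] by metis
    then show "Gmat rot i z z' * F z' = ind (Rot rot i z = z') * F z'" by (simp add: Gmat_def ind_def)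
  qed
  also have "\<dots> = F (Rot rot i z)" using Rot_in[OF rm url s0 z i] by (simp add: sum_ind_eq finite_Vtx)
  finally show ?thesis .
qed


lemma M_entry: assumes x: "x \<in> VV"
  shows "mat_mult VV (mat_mult VV (I_tensor_AH d2 nbr) (Gmat rot (k mod s))) (I_tensor_AH d2 nbr) x y = TT d2 s rot nbr k x y"
proof -
  let ?A = "I_tensor_AH d2 nbr" and ?G = "Gmat rot (k mod s)" and ?R = "Rot rot (k mod s)"
  have km: "k mod s < s" using s0 by simp
  have "mat_mult VV (mat_mult VV ?A ?G) ?A x y = (\<Sum>z'\<in>VV. \<Sum>z\<in>VV. ?A x z * ?G z z' * ?A z' y)"
    by (simp add: mat_mult_def sum_distrib_right)
  also have "\<dots> = (\<Sum>z\<in>VV. ?A x z * (\<Sum>z'\<in>VV. ?G z z' * ?A z' y))"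
    by (subst sum.swap) (simp add: sum_distrib_left mult.assoc)
  also have "\<dots> = (\<Sum>z\<in>VV. ?A x z * ?A (?R z) y)"
    by (intro sum.cong refl) (simp add: G_apply km)
  also have "\<dots> = (\<Sum>a<d2. ?A (?R (Hstep nbr a x)) y) / real d2"
    by (rule AH_apply[OF x])
  also have "\<dots> = (\<Sum>a<d2. \<Sum>b<d2. ind (Hstep nbr b (?R (Hstep nbr a x)) = y)) / (real d2 * real d2)"
    unfolding AH_entry by (simp add: sum_divide_distrib)
  also have "\<dots> = TT d2 s rot nbr k x y"
    unfolding TT_def sum_prod2 wstep_def by (simp add: walk_step_def)
  finally show ?thesis .
qed

end


lemma Omega_eq:
  assumes w: "w \<in> Vtx n d1 s \<times> Lst d2 (k2 - k1)" and k: "k1 \<le> k2" "k2 < k3"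
  shows "{\<omega> \<in> Wset n d1 d2 s k1 k3. split1 k1 k2 \<omega> = w}
       = (\<lambda>(p, rr). (fst w, snd w @ p # rr)) ` (({..<d2} \<times> {..<d2}) \<times> Lst d2 (k3 - Suc k2))"
    (is "?L = ?R")
proof
  show "?L \<subseteq> ?R"
  proof
    fix \<omega> assume om: "\<omega> \<in> ?L"
    obtain x ls where o: "\<omega> = (x, ls)" by (cases \<omega>)
    let ?l = "k2 - k1"
    have x: "x \<in> Vtx n d1 s" and len: "length ls = k3 - k1" and st: "set ls \<subseteq> {..<d2} \<times> {..<d2}"
      and sp: "x = fst w" "take ?l ls = snd w"
      using om o by (auto simp: Wset_def split1_def)
    have lt: "?l < length ls" using len k by simp
    have ls: "ls = take ?l ls @ ls ! ?l # drop (Suc ?l) ls" using id_take_nth_drop[OF lt] .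
    have "ls ! ?l \<in> {..<d2} \<times> {..<d2}" using st lt nth_mem by blast
    moreover have "drop (Suc ?l) ls \<in> Lst d2 (k3 - Suc k2)"
      using st len k by (auto simp: Lst_def dest: in_set_dropD)
    moreover have "ls = snd w @ ls ! ?l # drop (Suc ?l) ls" using ls sp(2) by metis
    hence "\<omega> = (\<lambda>(p, rr). (fst w, snd w @ p # rr)) (ls ! ?l, drop (Suc ?l) ls)" using o sp by simp
    ultimately show "\<omega> \<in> ?R" by (intro image_eqI[where x="(ls ! ?l, drop (Suc ?l) ls)"]) auto
  qed
next
  show "?R \<subseteq> ?L"
  proof
    fix \<omega> assume "\<omega> \<in> ?R"
    then obtain p rr where p: "p \<in> {..<d2} \<times> {..<d2}" and rr: "rr \<in> Lst d2 (k3 - Suc k2)"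
      and o: "\<omega> = (fst w, snd w @ p # rr)" by auto
    have "length (snd w) = k2 - k1" "set (snd w) \<subseteq> {..<d2} \<times> {..<d2}" "fst w \<in> Vtx n d1 s"
      using w by (auto simp: Lst_def)
    then show "\<omega> \<in> ?L" using p rr o k by (auto simp: Wset_def Lst_def split1_def)
  qed
qed

context
  fixes n d1 d2 s :: nat and rot :: "nat \<times> nat \<Rightarrow> nat \<times> nat" and nbr :: "nat list \<Rightarrow> nat \<Rightarrow> nat list"
    and k1 k2 k3 :: nat
  assumes rm: "rotation_map n d1 rot"
    and url: "undirected_regular_labeling (cube d1 s) d2 nbr"
    and s0: "0 < s" and d20: "0 < d2" and n0: "0 < n" and d10: "0 < d1"
    and k: "k1 \<le> k2" "k2 < k3"
begin

abbreviation "V3 \<equiv> Vtx n d1 s"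
abbreviation "D3 \<equiv> {..<d2} \<times> {..<d2}"
abbreviation "r3 \<equiv> k3 - Suc k2"
abbreviation "l3 \<equiv> k2 - k1"
abbreviation "RR \<equiv> real (card (Lst d2 r3))"
abbreviation "piw w \<equiv> walk_from rot nbr s k1 (fst w) (snd w)"

lemma S_formula: assumes w: "w \<in> V3 \<times> Lst d2 l3"
  shows "S_op n d1 d2 s rot nbr k1 k2 k3 f w
     = (\<Sum>p\<in>D3. \<Sum>rr\<in>Lst d2 r3. f (wstep s rot nbr k2 (piw w) p, rr)) / (real d2 * real d2 * RR)"
proof -
  let ?h = "\<lambda>(p, rr). (fst w, snd w @ p # rr)"
  have inj: "inj_on ?h (D3 \<times> Lst d2 r3)" by (auto simp: inj_on_def)
  have lw: "length (snd w) = l3" using w by (auto simp: Lst_def)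
  have sp: "split2 rot nbr s k1 k2 (?h (p, rr)) = (wstep s rot nbr k2 (piw w) p, rr)" for p rr
  proof -
    have "take (l3 + 1) (snd w @ p # rr) = snd w @ [p]" using lw by simp
    moreover have "drop (l3 + 1) (snd w @ p # rr) = rr" using lw by simp
    moreover have "k1 + length (snd w) = k2" using lw k by simp
    ultimately show ?thesis
      by (simp add: split2_def walk_from_snoc wstep_def)
  qed
  have "card (D3 \<times> Lst d2 r3) = d2 * d2 * card (Lst d2 r3)" by (simp add: card_cartesian_product)
  hence cd: "real (card (?h ` (D3 \<times> Lst d2 r3))) = real d2 * real d2 * RR"
    using card_image[OF inj] by simp
  have "(\<Sum>\<omega>\<in>?h ` (D3 \<times> Lst d2 r3). f (split2 rot nbr s k1 k2 \<omega>))
      = (\<Sum>x\<in>D3 \<times> Lst d2 r3. f (split2 rot nbr s k1 k2 (?h x)))"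
    by (rule sum.reindex[OF inj, unfolded comp_def])
  also have "\<dots> = (\<Sum>p\<in>D3. \<Sum>rr\<in>Lst d2 r3. f (wstep s rot nbr k2 (piw w) p, rr))"
    unfolding sum_prod2 sp ..
  finally show ?thesis
    unfolding S_op_def Let_def Omega_eq[OF w k] cd by simp
qed

lemma S_unit: assumes w: "w \<in> V3 \<times> Lst d2 l3" and a: "a \<in> V3 \<times> Lst d2 r3"
  shows "S_op n d1 d2 s rot nbr k1 k2 k3 (Defs.unit_vec a) w = TT d2 s rot nbr k2 (piw w) (fst a) / RR"
proof -
  have "(\<Sum>p\<in>D3. \<Sum>rr\<in>Lst d2 r3. Defs.unit_vec a (wstep s rot nbr k2 (piw w) p, rr))
      = (\<Sum>p\<in>D3. ind (wstep s rot nbr k2 (piw w) p = fst a) * (\<Sum>rr\<in>Lst d2 r3. ind (snd a = rr)))"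
  proof (intro sum.cong refl)
    fix p
    have "\<And>z rr. Defs.unit_vec a (z, rr) = ind (z = fst a) * ind (snd a = rr)"
      by (cases a) (auto simp: Defs.unit_vec_def ind_def)
    then show "(\<Sum>rr\<in>Lst d2 r3. Defs.unit_vec a (wstep s rot nbr k2 (piw w) p, rr))
      = ind (wstep s rot nbr k2 (piw w) p = fst a) * (\<Sum>rr\<in>Lst d2 r3. ind (snd a = rr))"
      by (simp add: sum_distrib_left)
  qed
  also have "\<dots> = (\<Sum>p\<in>D3. ind (wstep s rot nbr k2 (piw w) p = fst a))"
  proof -
    have "snd a \<in> Lst d2 r3" using a by auto
    then show ?thesis by (simp add: sum_ind_eq1[OF finite_Lst])
  qed
  finally show ?thesis unfolding S_formula[OF w] TT_def by simp
qed

lemma card_V3: "0 < card V3"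
proof -
  have "(0, replicate s 0) \<in> V3" using n0 d10 by (auto simp: Vtx_def cube_def)
  then show ?thesis using finite_Vtx by (auto simp: card_gt_0_iff)
qed

lemma RR_pos: "0 < RR" using d20 by (simp add: card_Lst)

lemma gram_S: assumes a: "a \<in> V3 \<times> Lst d2 r3" and a': "a' \<in> V3 \<times> Lst d2 r3"
  shows "gram_wrt (Wset n d1 d2 s (k2 + 1) k3) (uniform_prob (Wset n d1 d2 s (k2 + 1) k3))
           (Wset n d1 d2 s k1 k2) (uniform_prob (Wset n d1 d2 s k1 k2))
           (S_op n d1 d2 s rot nbr k1 k2 k3) a a'
       = (\<Sum>x\<in>V3. TT d2 s rot nbr k2 x (fst a) * TT d2 s rot nbr k2 x (fst a')) / RR"
proof -
  let ?F = "\<lambda>x. TT d2 s rot nbr k2 x (fst a) * TT d2 s rot nbr k2 x (fst a')"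
  have W1: "Wset n d1 d2 s (k2 + 1) k3 = V3 \<times> Lst d2 r3" by (simp add: Wset_eq)
  have W2: "Wset n d1 d2 s k1 k2 = V3 \<times> Lst d2 l3" by (simp add: Wset_eq)
  have c1: "real (card (V3 \<times> Lst d2 r3)) = real (card V3) * RR" by (simp add: card_cartesian_product)
  have c2: "real (card (V3 \<times> Lst d2 l3)) = real (card V3) * (real d2 * real d2) ^ l3"
    by (simp add: card_cartesian_product card_Lst)
  have "(\<Sum>w\<in>V3 \<times> Lst d2 l3. S_op n d1 d2 s rot nbr k1 k2 k3 (Defs.unit_vec a) w * S_op n d1 d2 s rot nbr k1 k2 k3 (Defs.unit_vec a') w)
      = (\<Sum>w\<in>V3 \<times> Lst d2 l3. ?F (piw w)) / (RR * RR)"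
    by (simp add: S_unit a a' sum_divide_distrib)
  also have "(\<Sum>w\<in>V3 \<times> Lst d2 l3. ?F (piw w)) = (real d2 * real d2) ^ l3 * (\<Sum>x\<in>V3. ?F x)"
    unfolding sum_prod2 using sum_walk_from[OF rm url s0, where G="?F" and l=l3 and i=k1] by simp
  finally have e: "(\<Sum>w\<in>V3 \<times> Lst d2 l3. S_op n d1 d2 s rot nbr k1 k2 k3 (Defs.unit_vec a) w * S_op n d1 d2 s rot nbr k1 k2 k3 (Defs.unit_vec a') w)
      = (real d2 * real d2) ^ l3 * (\<Sum>x\<in>V3. ?F x) / (RR * RR)" .
  have pos: "0 < real (card V3)" "0 < RR" "0 < real d2" using card_V3 RR_pos d20 by auto
  show ?thesis
  proof -
    have "gram_wrt (Wset n d1 d2 s (k2 + 1) k3) (uniform_prob (Wset n d1 d2 s (k2 + 1) k3))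
           (Wset n d1 d2 s k1 k2) (uniform_prob (Wset n d1 d2 s k1 k2))
           (S_op n d1 d2 s rot nbr k1 k2 k3) a a'
       = real (card (V3 \<times> Lst d2 r3)) / real (card (V3 \<times> Lst d2 l3)) *
         (\<Sum>w\<in>V3 \<times> Lst d2 l3. S_op n d1 d2 s rot nbr k1 k2 k3 (Defs.unit_vec a) w * S_op n d1 d2 s rot nbr k1 k2 k3 (Defs.unit_vec a') w)"
      unfolding gram_wrt_def W1 W2 uniform_prob_def
      by (simp add: sum_divide_distrib[symmetric])
    also have "\<dots> = (\<Sum>x\<in>V3. ?F x) / RR"
      unfolding e c1 c2 using pos by (simp add: field_simps)
    finally show ?thesis .
  qed
qed

end


lemma gram_M:
  assumes y: "y \<in> Vs" and y': "y' \<in> Vs" and fin: "finite Vs" and cV: "0 < card Vs"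
  shows "gram_wrt Vs (uniform_prob Vs) Vs (uniform_prob Vs) (mat_op Vs M) y y' = (\<Sum>x\<in>Vs. M x y * M x y')"
proof -
  have mo: "mat_op Vs M (Defs.unit_vec z) x = M x z" if "z \<in> Vs" for z x
  proof -
    have "mat_op Vs M (Defs.unit_vec z) x = (\<Sum>u\<in>Vs. ind (z = u) * M x u)"
      unfolding mat_op_def by (intro sum.cong refl) (auto simp: Defs.unit_vec_def ind_def)
    also have "\<dots> = M x z" using that fin by (simp add: sum_ind_eq)
    finally show ?thesis .
  qed
  show ?thesis unfolding gram_wrt_def uniform_prob_def mo[OF y] mo[OF y']
    using cV by (simp add: sum_divide_distrib[symmetric])
qed

theorem mainTheorem6:
  fixes n d1 d2 s :: nat
    and rot :: "nat \<times> nat \<Rightarrow> nat \<times> nat"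
    and nbr :: "nat list \<Rightarrow> nat \<Rightarrow> nat list"
    and k1 k2 k3 :: nat
  assumes "0 < n" and "0 < d1" and "0 < d2" and "0 < s"
    and "rotation_map n d1 rot"
    and "locally_invertible n d1 rot"
    and "undirected_regular_labeling (cube d1 s) d2 nbr"
    and "k1 \<le> k2" and "k2 < k3"
  shows "sigma2_unif (Wset n d1 d2 s (k2 + 1) k3) (Wset n d1 d2 s k1 k2)
            (S_op n d1 d2 s rot nbr k1 k2 k3)
         = sigma2_unif (Vtx n d1 s) (Vtx n d1 s)
            (mat_op (Vtx n d1 s)
               (mat_mult (Vtx n d1 s)
                  (mat_mult (Vtx n d1 s) (I_tensor_AH d2 nbr) (Gmat rot (k2 mod s)))
                  (I_tensor_AH d2 nbr)))"
proof -
  note n0 = assms(1) and d10 = assms(2) and d20 = assms(3) and s0 = assms(4)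
    and rm = assms(5) and url = assms(7) and k = assms(8,9)
  define Vs where "Vs = Vtx n d1 s"
  define M where "M = mat_mult Vs (mat_mult Vs (I_tensor_AH d2 nbr) (Gmat rot (k2 mod s))) (I_tensor_AH d2 nbr)"
  define R where "R = real (card (Lst d2 (k3 - Suc k2)))"
  define W' where "W' = Wset n d1 d2 s (k2 + 1) k3"
  define W where "W = Wset n d1 d2 s k1 k2"
  define K where "K b b' = (\<Sum>x\<in>Vs. M x b * M x b')" for b b'
  define X where "X a b = K (fst a) b / R" for a :: "(nat \<times> nat list) \<times> (nat \<times> nat) list" and b
  define Y where "Y b a = ind (fst a = b)" for b and a :: "(nat \<times> nat list) \<times> (nat \<times> nat) list"
  have W'eq: "W' = Vs \<times> Lst d2 (k3 - Suc k2)" unfolding W'_def Vs_def by (simp add: Wset_eq)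
  have finV: "finite Vs" unfolding Vs_def by (rule finite_Vtx)
  have finW': "finite W'" unfolding W'eq using finV finite_Lst by auto
  have cV: "0 < card Vs" unfolding Vs_def by (rule card_V3[OF rm url s0 d20 n0 d10 k])
  have Rpos: "0 < R" unfolding R_def by (rule RR_pos[OF rm url s0 d20 n0 d10 k])
  have ME: "M x y = TT d2 s rot nbr k2 x y" if "x \<in> Vs" for x y
    unfolding M_def Vs_def by (rule M_entry[OF rm url s0 d20 that[unfolded Vs_def]])
  have step1: "kth_largest_eig W' (gram_wrt W' (uniform_prob W') W (uniform_prob W) (S_op n d1 d2 s rot nbr k1 k2 k3)) 2
      = kth_largest_eig W' (\<lambda>a a'. \<Sum>b\<in>Vs. X a b * Y b a') 2"
  proof (rule kth_cong)
    fix a a' assume a: "a \<in> W'" and a': "a' \<in> W'"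
    have "gram_wrt W' (uniform_prob W') W (uniform_prob W) (S_op n d1 d2 s rot nbr k1 k2 k3) a a'
        = (\<Sum>x\<in>Vs. TT d2 s rot nbr k2 x (fst a) * TT d2 s rot nbr k2 x (fst a')) / R"
      unfolding W'_def W_def Vs_def R_def
      by (rule gram_S[OF rm url s0 d20 n0 d10 k]) (use a a' W'eq Vs_def in auto)
    also have "\<dots> = K (fst a) (fst a') / R" unfolding K_def by (simp add: ME)
    also have "\<dots> = (\<Sum>b\<in>Vs. ind (fst a' = b) * X a b)"
      using a' W'eq finV by (subst sum_ind_eq) (auto simp: X_def)
    finally show "gram_wrt W' (uniform_prob W') W (uniform_prob W) (S_op n d1 d2 s rot nbr k1 k2 k3) a a'
        = (\<Sum>b\<in>Vs. X a b * Y b a')" by (simp add: Y_def mult.commute)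
  qed
  have YX: "(\<Sum>a\<in>W'. Y b a * X a b') = K b b'" if b: "b \<in> Vs" for b b'
  proof -
    have "(\<Sum>a\<in>W'. Y b a * X a b') = (\<Sum>v\<in>Vs. \<Sum>rr\<in>Lst d2 (k3 - Suc k2). ind (v = b) * (K v b' / R))"
      unfolding W'eq sum_prod2 by (simp add: X_def Y_def)
    also have "\<dots> = (\<Sum>v\<in>Vs. ind (b = v) * K v b')"
      using Rpos by (intro sum.cong refl) (auto simp: R_def[symmetric] ind_def)
    also have "\<dots> = K b b'" using b finV by (simp add: sum_ind_eq)
    finally show ?thesis .
  qed
  have le: "card Vs \<le> card W'"
  proof -
    have "card W' = card Vs * card (Lst d2 (k3 - Suc k2))" unfolding W'eq by (simp add: card_cartesian_product)
    moreover have "1 \<le> card (Lst d2 (k3 - Suc k2))" using Rpos unfolding R_def by simp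
    ultimately show ?thesis by simp
  qed
  have nn: "0 \<le> y" if "poly (char_poly_on Vs (\<lambda>b b'. \<Sum>a\<in>W'. Y b a * X a b')) y = 0" for y
  proof -
    have "char_poly_on Vs (\<lambda>b b'. \<Sum>a\<in>W'. Y b a * X a b') = char_poly_on Vs (\<lambda>b b'. \<Sum>c\<in>Vs. M c b * M c b')"
      by (rule char_poly_on_cong) (simp add: YX K_def)
    hence "poly (char_poly_on Vs (\<lambda>b b'. \<Sum>c\<in>Vs. M c b * M c b')) y = 0" using that by simp
    then show ?thesis by (rule psd_roots_nonneg[OF finV finV])
  qed
  have step2: "kth_largest_eig W' (\<lambda>a a'. \<Sum>b\<in>Vs. X a b * Y b a') 2 = kth_largest_eig Vs (\<lambda>b b'. \<Sum>a\<in>W'. Y b a * X a b') 2"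
    by (rule kth_sylvester[OF finW' finV le nn])
  have step3: "kth_largest_eig Vs (\<lambda>b b'. \<Sum>a\<in>W'. Y b a * X a b') 2
      = kth_largest_eig Vs (gram_wrt Vs (uniform_prob Vs) Vs (uniform_prob Vs) (mat_op Vs M)) 2"
  proof (rule kth_cong)
    fix b b' assume b: "b \<in> Vs" and b': "b' \<in> Vs"
    show "(\<Sum>a\<in>W'. Y b a * X a b') = gram_wrt Vs (uniform_prob Vs) Vs (uniform_prob Vs) (mat_op Vs M) b b'"
      unfolding YX[OF b] gram_M[OF b b' finV cV] K_def ..
  qed
  have fin: "kth_largest_eig W' (gram_wrt W' (uniform_prob W') W (uniform_prob W) (S_op n d1 d2 s rot nbr k1 k2 k3)) 2
     = kth_largest_eig Vs (gram_wrt Vs (uniform_prob Vs) Vs (uniform_prob Vs) (mat_op Vs M)) 2"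
    unfolding step1 step2 step3 ..
  show ?thesis
    unfolding sigma2_unif_def singular_value_def W'_def[symmetric] W_def[symmetric] Vs_def[symmetric] M_def[symmetric]
    using fin by (rule arg_cong)
qed
end
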